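(* Let $X$ be a finite set, let $N$ be a rooted phylogenetic network on $X$, and let $\widetilde{N}$ be its normalisation. Then: (a) $\widetilde{N}$ has no shortcuts, i.e. no arc $(u,v)$ such that $\widetilde{N}$ also contains a directed path of length at least $2$ from $u$ to $v$; (b) $\widetilde{N}$ is a rooted phylogenetic network on $X$.
   Context: A rooted phylogenetic network on a finite set $X$ is a finite acyclic directed graph $N$ with a single vertex of in-degree $0$ (the root $\rho$), all other vertices being of one of three types: (1) in-degree $1$ and out-degree $0$ (the leaves, which form exactly the set $X$); (2) in-degree $1$ and out-degree at least $2$; (3) out-degree $1$ and in-degree at least $2$ (reticulate vertices). A vertex $v$ of $N$ is visible if there is a leaf $x\in X$ such that every directed path from $\rho$ to $x$ passes through $v$; the root and all leaves are visible. Let $V_{\rm vis}(N)$ be the set of visible vertices. Define the directed graph ${\rm Cov}(N)$ with vertex set $V_{\rm vis}(N)$ as follows: for each pair $u\neq v$ of visible vertices such that $N$ has a directed path from $u$ to $v$, put an arc $(u,v)$; then delete every arc $(u,v)$ for which there is also a directed path of length at least $2$ from $u$ to $v$ in this graph (so ${\rm Cov}(N)$ is the Hasse diagram of the reachability partial order on $V_{\rm vis}(N)$). A vertex is subdividing if its in-degree and out-degree are both $1$. The normalisation $\widetilde{N}$ of $N$ is the directed graph obtained from ${\rm Cov}(N)$ by suppressing every subdividing vertex (i.e. replacing each maximal path whose interior vertices are subdividing by a single arc between its endpoints). *)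

theory Defs
  imports Main
begin

definition indeg :: "('v \<times> 'v) set \<Rightarrow> 'v \<Rightarrow> nat" where
  "indeg A v = card {u. (u, v) \<in> A}"

definition outdeg :: "('v \<times> 'v) set \<Rightarrow> 'v \<Rightarrow> nat" where
  "outdeg A v = card {w. (v, w) \<in> A}"

definition phylo_network :: "'v set \<Rightarrow> 'v set \<Rightarrow> ('v \<times> 'v) set \<Rightarrow> bool" where
  "phylo_network X V A \<longleftrightarrow>
     finite V \<and> A \<subseteq> V \<times> V \<and> acyclic A \<and>
     (\<exists>!\<rho>. \<rho> \<in> V \<and> indeg A \<rho> = 0) \<and>
     (\<forall>v\<in>V. indeg A v \<noteq> 0 \<longrightarrow>
        (indeg A v = 1 \<and> outdeg A v = 0) \<or>
        (indeg A v = 1 \<and> outdeg A v \<ge> 2) \<or>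
        (outdeg A v = 1 \<and> indeg A v \<ge> 2)) \<and>
     X = {v \<in> V. indeg A v = 1 \<and> outdeg A v = 0}"

definition root :: "'v set \<Rightarrow> ('v \<times> 'v) set \<Rightarrow> 'v" where
  "root V A = (THE \<rho>. \<rho> \<in> V \<and> indeg A \<rho> = 0)"

definition dpath :: "('v \<times> 'v) set \<Rightarrow> 'v list \<Rightarrow> bool" where
  "dpath A p \<longleftrightarrow> p \<noteq> [] \<and> (\<forall>i. Suc i < length p \<longrightarrow> (p ! i, p ! Suc i) \<in> A)"

definition visible :: "'v set \<Rightarrow> 'v set \<Rightarrow> ('v \<times> 'v) set \<Rightarrow> 'v \<Rightarrow> bool" where
  "visible X V A v \<longleftrightarrow> v \<in> V \<and>
     (v = root V A \<or> v \<in> X \<or>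
      (\<exists>x\<in>X. \<forall>p. dpath A p \<and> hd p = root V A \<and> last p = x \<longrightarrow> v \<in> set p))"

definition Vvis :: "'v set \<Rightarrow> 'v set \<Rightarrow> ('v \<times> 'v) set \<Rightarrow> 'v set" where
  "Vvis X V A = {v. visible X V A v}"

definition reach_vis :: "'v set \<Rightarrow> 'v set \<Rightarrow> ('v \<times> 'v) set \<Rightarrow> ('v \<times> 'v) set" where
  "reach_vis X V A = {(u, v). u \<in> Vvis X V A \<and> v \<in> Vvis X V A \<and> u \<noteq> v \<and> (u, v) \<in> A\<^sup>+}"

definition CovA :: "'v set \<Rightarrow> 'v set \<Rightarrow> ('v \<times> 'v) set \<Rightarrow> ('v \<times> 'v) set" where
  "CovA X V A = {e \<in> reach_vis X V A. e \<notin> reach_vis X V A O (reach_vis X V A)\<^sup>+}"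

definition subdividing :: "('v \<times> 'v) set \<Rightarrow> 'v \<Rightarrow> bool" where
  "subdividing E v \<longleftrightarrow> indeg E v = 1 \<and> outdeg E v = 1"

text \<open>Suppression of all subdividing vertices of the digraph (W, E): the remaining vertices are
  the non-subdividing ones, and a and b are joined iff E has a path from a to b of length at least 1
  all of whose interior vertices are subdividing.\<close>
definition suppV :: "'v set \<Rightarrow> ('v \<times> 'v) set \<Rightarrow> 'v set" where
  "suppV W E = {v \<in> W. \<not> subdividing E v}"

definition suppA :: "'v set \<Rightarrow> ('v \<times> 'v) set \<Rightarrow> ('v \<times> 'v) set" where
  "suppA W E = {(a, b). a \<in> suppV W E \<and> b \<in> suppV W E \<and>
      (a, b) \<in> {(x, y) \<in> E. subdividing E y}\<^sup>* O E}"

definition normV :: "'v set \<Rightarrow> 'v set \<Rightarrow> ('v \<times> 'v) set \<Rightarrow> 'v set" where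
  "normV X V A = suppV (Vvis X V A) (CovA X V A)"

definition normA :: "'v set \<Rightarrow> 'v set \<Rightarrow> ('v \<times> 'v) set \<Rightarrow> ('v \<times> 'v) set" where
  "normA X V A = suppA (Vvis X V A) (CovA X V A)"

end

theory Submission
  imports Defs
begin


definition av :: "('v \<times> 'v) set \<Rightarrow> 'v \<Rightarrow> ('v \<times> 'v) set" where
  "av A v = {(a, b) \<in> A. a \<noteq> v \<and> b \<noteq> v}"

lemma av_sub: "av A v \<subseteq> A" unfolding av_def by auto

lemma dpath_Cons: assumes "dpath A (a # q)" "q \<noteq> []" shows "dpath A q \<and> (a, hd q) \<in> A"
proof -
  have H: "\<And>i. Suc i < length (a # q) \<Longrightarrow> ((a # q) ! i, (a # q) ! Suc i) \<in> A"
    using assms(1) unfolding dpath_def by blast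
  have "dpath A q" unfolding dpath_def
  proof (intro conjI allI impI)
    show "q \<noteq> []" by fact
    fix i assume "Suc i < length q"
    then have "Suc (Suc i) < length (a # q)" by simp
    from H[OF this] show "(q ! i, q ! Suc i) \<in> A" by simp
  qed
  moreover have "(a, hd q) \<in> A" using H[of 0] assms(2) by (simp add: hd_conv_nth)
  ultimately show ?thesis by simp
qed

lemma E1: "dpath A p \<Longrightarrow> v \<notin> set p \<Longrightarrow> (hd p, last p) \<in> (av A v)\<^sup>*"
proof (induction p)
  case Nil then show ?case by (simp add: dpath_def)
next
  case (Cons a q)
  show ?case
  proof (cases "q = []")
    case True then show ?thesis by simp
  next
    case False
    from dpath_Cons[OF Cons.prems(1) False] have "dpath A q" "(a, hd q) \<in> A" by auto
    with Cons have "(hd q, last q) \<in> (av A v)\<^sup>*" by simp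
    moreover have "(a, hd q) \<in> av A v" using \<open>(a, hd q) \<in> A\<close> Cons.prems(2) False
      unfolding av_def by (auto simp: hd_in_set)
    ultimately show ?thesis using False by (simp add: converse_rtrancl_into_rtrancl)
  qed
qed

lemma dpath_ConsI: assumes "dpath A q" "(a, hd q) \<in> A" shows "dpath A (a # q)"
  unfolding dpath_def
proof (intro conjI allI impI)
  show "a # q \<noteq> []" by simp
  fix i assume i: "Suc i < length (a # q)"
  show "((a # q) ! i, (a # q) ! Suc i) \<in> A"
  proof (cases i)
    case 0 then show ?thesis using assms by (simp add: hd_conv_nth dpath_def)
  next
    case (Suc j) then show ?thesis using assms(1) i by (simp add: dpath_def)
  qed
qed

lemma E2: "(a, b) \<in> (av A v)\<^sup>* \<Longrightarrow> a \<noteq> v \<Longrightarrow> \<exists>p. dpath A p \<and> hd p = a \<and> last p = b \<and> v \<notin> set p"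
proof (induction rule: converse_rtrancl_induct)
  case base
  then show ?case by (intro exI[of _ "[b]"]) (simp add: dpath_def)
next
  case (step a c)
  then have ac: "(a, c) \<in> A" "c \<noteq> v" "a \<noteq> v" unfolding av_def by auto
  with step obtain p where p: "dpath A p" "hd p = c" "last p = b" "v \<notin> set p" by auto
  then have "p \<noteq> []" by (simp add: dpath_def)
  then show ?case using p ac by (intro exI[of _ "a # p"]) (auto intro: dpath_ConsI)
qed

lemma av_rt_sub: "(a, b) \<in> (av A' v)\<^sup>* \<Longrightarrow> (a, b) \<in> A'\<^sup>*"
  by (rule subsetD[OF rtrancl_mono[OF av_sub]])
lemma av_to_v: "(a, v) \<in> (av A' v)\<^sup>* \<Longrightarrow> a = v"
  by (erule rtranclE) (simp_all add: av_def)
lemma av_from_v: "(v, b) \<in> (av A' v)\<^sup>* \<Longrightarrow> b = v"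
  by (erule converse_rtranclE) (simp_all add: av_def)


lemma card1_unique: "card S = 1 \<Longrightarrow> x \<in> S \<Longrightarrow> y \<in> S \<Longrightarrow> x = y"
  by (metis card_1_singletonE singletonD)

locale PN =
  fixes X V :: "'v set" and A :: "('v \<times> 'v) set"
  assumes pn: "phylo_network X V A"
begin

abbreviation "R \<equiv> root V A"

lemma finV: "finite V" and AV: "A \<subseteq> V \<times> V" and acyc: "acyclic A"
  and ex1: "\<exists>!\<rho>. \<rho> \<in> V \<and> indeg A \<rho> = 0"
  and types0: "\<And>v. v\<in>V \<Longrightarrow> indeg A v \<noteq> 0 \<Longrightarrow>
        (indeg A v = 1 \<and> outdeg A v = 0) \<or>
        (indeg A v = 1 \<and> outdeg A v \<ge> 2) \<or>
        (outdeg A v = 1 \<and> indeg A v \<ge> 2)"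
  and Xdef: "X = {v \<in> V. indeg A v = 1 \<and> outdeg A v = 0}"
  using pn unfolding phylo_network_def by blast+

lemma R_prop: "R \<in> V" "indeg A R = 0"
  using theI'[OF ex1] unfolding root_def by auto

lemma R_uniq: "v \<in> V \<Longrightarrow> indeg A v = 0 \<Longrightarrow> v = R"
  using ex1 R_prop by blast

lemma fin_in: "finite {u. (u, v) \<in> A}"
  by (rule finite_subset[OF _ finV]) (use AV in auto)
lemma fin_out: "finite {u. (v, u) \<in> A}"
  by (rule finite_subset[OF _ finV]) (use AV in auto)

lemma indeg0: "indeg A v = 0 \<longleftrightarrow> (\<forall>u. (u, v) \<notin> A)"
  unfolding indeg_def using fin_in by auto
lemma outdeg0: "outdeg A v = 0 \<longleftrightarrow> (\<forall>u. (v, u) \<notin> A)"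
  unfolding outdeg_def using fin_out by auto

lemma R_noin: "(u, R) \<notin> A" using R_prop indeg0 by auto
lemma R_notrancl: "(u, R) \<notin> A\<^sup>+" using R_noin by (metis tranclD2)

lemma types: "v \<in> V \<Longrightarrow> v \<noteq> R \<Longrightarrow>
        (indeg A v = 1 \<and> outdeg A v = 0) \<or>
        (indeg A v = 1 \<and> outdeg A v \<ge> 2) \<or>
        (outdeg A v = 1 \<and> indeg A v \<ge> 2)"
  using types0 R_uniq by blast

lemma in1_unique: "indeg A v = 1 \<Longrightarrow> (u, v) \<in> A \<Longrightarrow> (u', v) \<in> A \<Longrightarrow> u = u'"
  unfolding indeg_def using card1_unique by fastforce
lemma out1_unique: "outdeg A v = 1 \<Longrightarrow> (v, u) \<in> A \<Longrightarrow> (v, u') \<in> A \<Longrightarrow> u = u'"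
  unfolding outdeg_def using card1_unique by fastforce

lemma finA: "finite A" using finV AV by (meson finite_SigmaI finite_subset)

lemma trancl_V: "(a, b) \<in> A\<^sup>+ \<Longrightarrow> a \<in> V \<and> b \<in> V"
  using AV by (metis mem_Sigma_iff subsetD trancl_subset_Sigma)

lemma rt_R: "v \<in> V \<Longrightarrow> (R, v) \<in> A\<^sup>*"
proof (induction v rule: wf_induct[OF finite_acyclic_wf[OF finA acyc]])
  case (1 v)
  show ?case
  proof (cases "v = R")
    case True then show ?thesis by simp
  next
    case False
    then have "indeg A v \<noteq> 0" using R_uniq 1 by blast
    then obtain u where "(u, v) \<in> A" using indeg0 by auto
    then have "u \<in> V" using AV by auto
    with 1 \<open>(u, v) \<in> A\<close> have "(R, u) \<in> A\<^sup>*" by blast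
    with \<open>(u, v) \<in> A\<close> show ?thesis by simp
  qed
qed

lemma X_V: "x \<in> X \<Longrightarrow> x \<in> V" using Xdef by auto
lemma X_out: "x \<in> X \<Longrightarrow> (x, w) \<notin> A" using Xdef outdeg0 by auto
lemma X_outt: "x \<in> X \<Longrightarrow> (x, w) \<notin> A\<^sup>+" using X_out by (metis converse_tranclE)
lemma X_notR: "x \<in> X \<Longrightarrow> x \<noteq> R" using Xdef R_prop by auto

lemma to_leaf: "v \<in> V \<Longrightarrow> v \<noteq> R \<Longrightarrow> \<exists>x\<in>X. (v, x) \<in> A\<^sup>*"
proof (induction v rule: wf_induct[OF finite_acyclic_wf_converse[OF finA acyc]])
  case (1 v)
  show ?case
  proof (cases "outdeg A v = 0")
    case True
    with types[OF 1(2,3)] have "v \<in> X" using Xdef 1 by auto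
    then show ?thesis by blast
  next
    case False
    then obtain c where c: "(v, c) \<in> A" using outdeg0 by auto
    then have "c \<in> V" "c \<noteq> R" using AV R_noin by auto
    with 1 c obtain x where "x \<in> X" "(c, x) \<in> A\<^sup>*" by blast
    with c show ?thesis by (meson converse_rtrancl_into_rtrancl)
  qed
qed

lemma K1: "(a, b) \<in> A\<^sup>* \<Longrightarrow> (v, b) \<notin> A\<^sup>* \<Longrightarrow> (a, b) \<in> (av A v)\<^sup>*"
proof (induction rule: converse_rtrancl_induct)
  case base then show ?case by simp
next
  case (step a c)
  have cb: "(c, b) \<in> A\<^sup>*" by fact
  have ab: "(a, b) \<in> A\<^sup>*" using step.hyps(1) cb by (rule converse_rtrancl_into_rtrancl)
  have "a \<noteq> v" using ab step.prems by auto
  moreover have "c \<noteq> v" using cb step.prems by auto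
  ultimately have "(a, c) \<in> av A v" using step.hyps(1) unfolding av_def by auto
  moreover have "(c, b) \<in> (av A v)\<^sup>*" using step.IH step.prems by simp
  ultimately show ?case by (rule converse_rtrancl_into_rtrancl)
qed

lemma K2: "(a, b) \<in> A\<^sup>* \<Longrightarrow> (a, v) \<notin> A\<^sup>* \<Longrightarrow> (a, b) \<in> (av A v)\<^sup>*"
proof (induction rule: rtrancl_induct)
  case base then show ?case by simp
next
  case (step c b)
  have ac: "(a, c) \<in> A\<^sup>*" by fact
  have ab: "(a, b) \<in> A\<^sup>*" using ac step.hyps(2) by (rule rtrancl_into_rtrancl)
  have "c \<noteq> v" using ac step.prems by auto
  moreover have "b \<noteq> v" using ab step.prems by auto
  ultimately have "(c, b) \<in> av A v" using step.hyps(2) unfolding av_def by auto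
  moreover have "(a, c) \<in> (av A v)\<^sup>*" using step.IH step.prems by simp
  ultimately show ?case by (rule rtrancl_into_rtrancl[rotated])
qed

lemma visible_iff: "visible X V A v \<longleftrightarrow> v \<in> V \<and> (v = R \<or> (\<exists>x\<in>X. (R, x) \<notin> (av A v)\<^sup>*))"
proof
  assume vis: "visible X V A v"
  have v: "v \<in> V" using vis by (simp add: visible_def)
  have c: "v = R \<or> v \<in> X \<or> (\<exists>x\<in>X. \<forall>p. dpath A p \<and> hd p = R \<and> last p = x \<longrightarrow> v \<in> set p)"
    using vis unfolding visible_def by (elim conjE)
  show "v \<in> V \<and> (v = R \<or> (\<exists>x\<in>X. (R, x) \<notin> (av A v)\<^sup>*))"
  proof (cases "v = R")
    case True then show ?thesis using v by simp
  next
    case False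
    show ?thesis
    proof (cases "v \<in> X")
      case True
      have "(R, v) \<notin> (av A v)\<^sup>*"
      proof
        assume "(R, v) \<in> (av A v)\<^sup>*"
        then have "R = v" by (rule av_to_v)
        with False show False by simp
      qed
      then show ?thesis using True v by blast
    next
      case False2: False
      from c False False2 obtain x where x: "x \<in> X" "\<forall>p. dpath A p \<and> hd p = R \<and> last p = x \<longrightarrow> v \<in> set p"
        by blast
      have "(R, x) \<notin> (av A v)\<^sup>*"
      proof
        assume "(R, x) \<in> (av A v)\<^sup>*"
        from E2[OF this] False obtain p where "dpath A p \<and> hd p = R \<and> last p = x" "v \<notin> set p"
          by auto
        with x(2) show False by blast
      qed
      then show ?thesis using x v by blast
    qed
  qed
next
  assume a: "v \<in> V \<and> (v = R \<or> (\<exists>x\<in>X. (R, x) \<notin> (av A v)\<^sup>*))"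
  show "visible X V A v"
  proof (cases "v = R")
    case True then show ?thesis using a by (simp add: visible_def)
  next
    case False
    then obtain x where x: "x \<in> X" "(R, x) \<notin> (av A v)\<^sup>*" using a by blast
    have "\<forall>p. dpath A p \<and> hd p = R \<and> last p = x \<longrightarrow> v \<in> set p"
    proof (intro allI impI)
      fix p assume p: "dpath A p \<and> hd p = R \<and> last p = x"
      show "v \<in> set p"
      proof (rule ccontr)
        assume "v \<notin> set p"
        from E1[of A p v, OF _ this] p have "(R, x) \<in> (av A v)\<^sup>*" by simp
        with x(2) show False by simp
      qed
    qed
    then show ?thesis using a x unfolding visible_def by blast
  qed
qed

lemma vis_R: "visible X V A R" using visible_iff R_prop by simp
lemma vis_X: "x \<in> X \<Longrightarrow> visible X V A x"
  unfolding visible_def using X_V by auto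

lemma vis_below: "(R, x) \<notin> (av A v)\<^sup>* \<Longrightarrow> x \<in> V \<Longrightarrow> (v, x) \<in> A\<^sup>*"
  using K1 rt_R by blast

lemma vis_parent:
  assumes v: "visible X V A v" "v \<noteq> R" "indeg A v = 1" and pv: "(p, v) \<in> A"
  shows "visible X V A p"
proof -
  have pV: "p \<in> V" using pv AV by auto
  show ?thesis
  proof (cases "p = R")
    case True then show ?thesis using vis_R by simp
  next
    case False
    obtain x where x: "x \<in> X" "(R, x) \<notin> (av A v)\<^sup>*" using v visible_iff by blast
    have "(R, y) \<in> (av A p)\<^sup>* \<Longrightarrow> (R, y) \<in> (av A v)\<^sup>* \<and> y \<noteq> v" for y
    proof (induction rule: rtrancl_induct)
      case base then show ?case using v by simp
    next
      case (step y z)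
      have "z \<noteq> v"
      proof
        assume "z = v"
        have yz: "(y, z) \<in> A" "y \<noteq> p" using step.hyps(2) by (auto simp: av_def)
        have "(y, v) \<in> A" using yz \<open>z = v\<close> by simp
        then have "y = p" using in1_unique[OF v(3) pv] by blast
        then show False using yz by simp
      qed
      moreover have "(y, z) \<in> av A v" using step.hyps(2) step.IH \<open>z \<noteq> v\<close> by (auto simp: av_def)
      ultimately show ?case using step.IH by (meson rtrancl_into_rtrancl)
    qed
    then have "(R, x) \<notin> (av A p)\<^sup>*" using x by blast
    then show ?thesis using visible_iff pV x by blast
  qed
qed

lemma vis_child:
  assumes v: "visible X V A v" "v \<noteq> R" "v \<notin> X" "outdeg A v = 1" and vc: "(v, c) \<in> A"
  shows "visible X V A c"
proof -
  have cV: "c \<in> V" using vc AV by auto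
  obtain x where x: "x \<in> X" "(R, x) \<notin> (av A v)\<^sup>*" using v visible_iff by blast
  have xv: "x \<noteq> v" using x v by auto
  have "(a, b) \<in> (av A c)\<^sup>* \<Longrightarrow> b \<noteq> v \<Longrightarrow> (a, b) \<in> (av A v)\<^sup>*" for a b
  proof (induction rule: converse_rtrancl_induct)
    case base then show ?case by simp
  next
    case (step a y)
    then have IH: "(y, b) \<in> (av A v)\<^sup>*" by blast
    have "y \<noteq> v" using IH av_from_v step(4) by metis
    moreover have "a \<noteq> v" using step(1) out1_unique[OF v(4) vc] unfolding av_def by auto
    ultimately have "(a, y) \<in> av A v" using step(1) unfolding av_def by auto
    with IH show ?case by (meson converse_rtrancl_into_rtrancl)
  qed
  then have "(R, x) \<notin> (av A c)\<^sup>*" using x xv by blast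
  moreover have "c \<noteq> R" using vc R_noin by auto
  ultimately show ?thesis using visible_iff cV x by blast
qed

end


lemma hasse_gen:
  assumes fin: "finite r" and tr: "trans r" and irr: "\<And>x. (x, x) \<notin> r"
  shows "(a, b) \<in> r \<Longrightarrow> (a, b) \<in> {e \<in> r. e \<notin> r O r}\<^sup>+"
proof (induction "card {z. (a, z) \<in> r \<and> (z, b) \<in> r}" arbitrary: a b rule: less_induct)
  case less
  show ?case
  proof (cases "(a, b) \<in> r O r")
    case False then show ?thesis using less.prems by (intro r_into_trancl) simp
  next
    case True
    then obtain z where az: "(a, z) \<in> r" and zb: "(z, b) \<in> r" by blast
    have finI: "finite {w. (a, w) \<in> r \<and> (w, b) \<in> r}"
      by (rule finite_subset[OF _ finite_Range[OF fin]]) (auto simp: Range_iff)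
    have s1: "{w. (a, w) \<in> r \<and> (w, z) \<in> r} \<subset> {w. (a, w) \<in> r \<and> (w, b) \<in> r}"
    proof
      show "{w. (a, w) \<in> r \<and> (w, z) \<in> r} \<subseteq> {w. (a, w) \<in> r \<and> (w, b) \<in> r}"
        using zb tr by (auto dest: transD)
      have "z \<notin> {w. (a, w) \<in> r \<and> (w, z) \<in> r}" using irr by auto
      moreover have "z \<in> {w. (a, w) \<in> r \<and> (w, b) \<in> r}" using az zb by auto
      ultimately show "{w. (a, w) \<in> r \<and> (w, z) \<in> r} \<noteq> {w. (a, w) \<in> r \<and> (w, b) \<in> r}" by blast
    qed
    have s2: "{w. (z, w) \<in> r \<and> (w, b) \<in> r} \<subset> {w. (a, w) \<in> r \<and> (w, b) \<in> r}"
    proof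
      show "{w. (z, w) \<in> r \<and> (w, b) \<in> r} \<subseteq> {w. (a, w) \<in> r \<and> (w, b) \<in> r}"
        using az tr by (auto dest: transD)
      have "z \<notin> {w. (z, w) \<in> r \<and> (w, b) \<in> r}" using irr by auto
      moreover have "z \<in> {w. (a, w) \<in> r \<and> (w, b) \<in> r}" using az zb by auto
      ultimately show "{w. (z, w) \<in> r \<and> (w, b) \<in> r} \<noteq> {w. (a, w) \<in> r \<and> (w, b) \<in> r}" by blast
    qed
    have "(a, z) \<in> {e \<in> r. e \<notin> r O r}\<^sup>+"
      using less.hyps[OF psubset_card_mono[OF finI s1] az] .
    moreover have "(z, b) \<in> {e \<in> r. e \<notin> r O r}\<^sup>+"
      using less.hyps[OF psubset_card_mono[OF finI s2] zb] .
    ultimately show ?thesis by (rule trancl_trans)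
  qed
qed

context PN begin

abbreviation "W \<equiv> Vvis X V A"
abbreviation "RV \<equiv> reach_vis X V A"
abbreviation "E \<equiv> CovA X V A"

lemma W_iff: "v \<in> W \<longleftrightarrow> visible X V A v" by (simp add: Vvis_def)
lemma W_V: "v \<in> W \<Longrightarrow> v \<in> V" by (simp add: Vvis_def visible_def)

lemma irrA: "(x, x) \<notin> A\<^sup>+" using acyc by (simp add: acyclic_def)

lemma RV_iff: "(u, v) \<in> RV \<longleftrightarrow> u \<in> W \<and> v \<in> W \<and> (u, v) \<in> A\<^sup>+"
proof -
  have "u \<noteq> v" if "(u, v) \<in> A\<^sup>+" using that irrA by metis
  then show ?thesis unfolding reach_vis_def by blast
qed

lemma RV_trans: "trans RV"
  by (rule transI) (auto simp: RV_iff)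

lemma RV_irr: "(u, u) \<notin> RV" using RV_iff irrA by blast

lemma RV_fin: "finite RV"
proof (rule finite_subset[of _ "V \<times> V"])
  show "RV \<subseteq> V \<times> V" using RV_iff W_V by auto
  show "finite (V \<times> V)" using finV by simp
qed

lemma E_iff: "(u, v) \<in> E \<longleftrightarrow> (u, v) \<in> RV \<and> \<not> (\<exists>z. (u, z) \<in> RV \<and> (z, v) \<in> RV)"
  unfolding CovA_def using trancl_id[OF RV_trans] by auto

lemma E_RV: "(u, v) \<in> E \<Longrightarrow> (u, v) \<in> RV" using E_iff by blast

lemma Et_RV: "(u, v) \<in> E\<^sup>+ \<Longrightarrow> (u, v) \<in> RV"
proof (induction rule: trancl_induct)
  case (base y) then show ?case by (rule E_RV)
next
  case (step y z) then show ?case using transD[OF RV_trans step.IH E_RV[OF step.hyps(2)]] by simp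
qed

lemma RV_Et: "(u, v) \<in> RV \<Longrightarrow> (u, v) \<in> E\<^sup>+"
proof -
  assume "(u, v) \<in> RV"
  from hasse_gen[OF RV_fin RV_trans RV_irr this]
  have "(u, v) \<in> {e \<in> RV. e \<notin> RV O RV}\<^sup>+" .
  moreover have "{e \<in> RV. e \<notin> RV O RV} = E"
    unfolding CovA_def using trancl_id[OF RV_trans] by simp
  ultimately show ?thesis by simp
qed

lemma E_W: "(u, v) \<in> E \<Longrightarrow> u \<in> W \<and> v \<in> W" using E_RV RV_iff by blast
lemma E_A: "(u, v) \<in> E \<Longrightarrow> (u, v) \<in> A\<^sup>+" using E_RV RV_iff by blast
lemma Et_A: "(u, v) \<in> E\<^sup>+ \<Longrightarrow> (u, v) \<in> A\<^sup>+" using Et_RV RV_iff by blast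
lemma Ert_A: "(u, v) \<in> E\<^sup>* \<Longrightarrow> (u, v) \<in> A\<^sup>*"
proof (induction rule: rtrancl_induct)
  case base then show ?case by simp
next
  case (step y z)
  have "(u, z) \<in> A\<^sup>+" by (rule rtrancl_trancl_trancl[OF step.IH E_A[OF step.hyps(2)]])
  then show ?case by (rule trancl_into_rtrancl)
qed
lemma E_irr: "(x, x) \<notin> E\<^sup>+" using Et_RV RV_irr by blast
lemma E_acyc: "acyclic E" unfolding acyclic_def using E_irr by blast

lemma E_fin: "finite E"
  by (rule finite_subset[OF _ RV_fin]) (use E_RV in auto)

lemma E_sub: "E \<subseteq> W \<times> W" using E_W by auto

lemma R_W: "R \<in> W" using W_iff vis_R by simp

lemma E_noin_R: "(u, R) \<notin> E" using E_A R_notrancl by blast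

lemma E_in_ex: "v \<in> W \<Longrightarrow> v \<noteq> R \<Longrightarrow> \<exists>u. (u, v) \<in> E"
proof -
  assume v: "v \<in> W" "v \<noteq> R"
  have "(R, v) \<in> A\<^sup>*" using rt_R W_V v by blast
  then have "(R, v) \<in> A\<^sup>+" using rtranclD[OF \<open>(R, v) \<in> A\<^sup>*\<close>] v by auto
  then have "(R, v) \<in> RV" using RV_iff R_W v by blast
  then have "(R, v) \<in> E\<^sup>+" by (rule RV_Et)
  then show ?thesis using tranclD2 by fast
qed

lemma E_pred1:
  assumes v: "v \<in> W" "v \<noteq> R" "indeg A v = 1"
  shows "\<exists>p. {u. (u, v) \<in> E} = {p}"
proof -
  have "indeg A v \<noteq> 0" using v(3) by simp
  then obtain p where pv: "(p, v) \<in> A" using indeg0[of v] by auto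
  have pvis: "p \<in> W" using vis_parent[OF _ v(2,3) pv] v(1) W_iff by blast
  have below: "(u, v) \<in> A\<^sup>+ \<Longrightarrow> (u, p) \<in> A\<^sup>*" for u
  proof -
    assume "(u, v) \<in> A\<^sup>+"
    then obtain y where "(u, y) \<in> A\<^sup>*" "(y, v) \<in> A" using tranclD2 by fast
    moreover have "y = p" using in1_unique[OF v(3) \<open>(y, v) \<in> A\<close> pv] .
    ultimately show ?thesis by simp
  qed
  have "(u, v) \<in> E \<longleftrightarrow> u = p" for u
  proof
    assume uv: "(u, v) \<in> E"
    show "u = p"
    proof (rule ccontr)
      assume "u \<noteq> p"
      have "(u, p) \<in> A\<^sup>*" using below E_A uv by blast
      then have "(u, p) \<in> A\<^sup>+" using rtranclD[OF \<open>(u, p) \<in> A\<^sup>*\<close>] \<open>u \<noteq> p\<close> by auto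
      then have "(u, p) \<in> RV" using RV_iff pvis E_W uv by blast
      moreover have "(p, v) \<in> RV" using RV_iff pvis v pv by blast
      ultimately show False using uv E_iff by blast
    qed
  next
    assume "u = p"
    have "(p, v) \<in> RV" using RV_iff pvis v pv by blast
    moreover have "\<not> (\<exists>z. (p, z) \<in> RV \<and> (z, v) \<in> RV)"
    proof
      assume "\<exists>z. (p, z) \<in> RV \<and> (z, v) \<in> RV"
      then obtain z where "(p, z) \<in> A\<^sup>+" "(z, v) \<in> A\<^sup>+" using RV_iff by blast
      then have "(p, z) \<in> A\<^sup>+" "(z, p) \<in> A\<^sup>*" using below by auto
      then have "(p, p) \<in> A\<^sup>+" by (rule trancl_rtrancl_trancl)
      then show False using irrA by blast
    qed
    ultimately show "(u, v) \<in> E" using E_iff \<open>u = p\<close> by blast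
  qed
  then show ?thesis by blast
qed

lemma E_succ1:
  assumes v: "v \<in> W" "v \<noteq> R" "v \<notin> X" "outdeg A v = 1"
  shows "\<exists>c. {w. (v, w) \<in> E} = {c}"
proof -
  have "outdeg A v \<noteq> 0" using v(4) by simp
  then obtain c where vc: "(v, c) \<in> A" using outdeg0[of v] by auto
  have cvis: "c \<in> W" using vis_child[OF _ v(2,3,4) vc] v(1) W_iff by blast
  have above: "(v, w) \<in> A\<^sup>+ \<Longrightarrow> (c, w) \<in> A\<^sup>*" for w
  proof -
    assume "(v, w) \<in> A\<^sup>+"
    then obtain y where "(v, y) \<in> A" "(y, w) \<in> A\<^sup>*" using tranclD by fast
    moreover have "y = c" using out1_unique[OF v(4) \<open>(v, y) \<in> A\<close> vc] .
    ultimately show ?thesis by simp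
  qed
  have "(v, w) \<in> E \<longleftrightarrow> w = c" for w
  proof
    assume vw: "(v, w) \<in> E"
    show "w = c"
    proof (rule ccontr)
      assume "w \<noteq> c"
      have "(c, w) \<in> A\<^sup>*" using above E_A vw by blast
      then have "(c, w) \<in> A\<^sup>+" using rtranclD[OF \<open>(c, w) \<in> A\<^sup>*\<close>] \<open>w \<noteq> c\<close> by auto
      then have "(c, w) \<in> RV" using RV_iff cvis E_W vw by blast
      moreover have "(v, c) \<in> RV" using RV_iff cvis v vc by blast
      ultimately show False using vw E_iff by blast
    qed
  next
    assume "w = c"
    have "(v, c) \<in> RV" using RV_iff cvis v vc by blast
    moreover have "\<not> (\<exists>z. (v, z) \<in> RV \<and> (z, c) \<in> RV)"
    proof
      assume "\<exists>z. (v, z) \<in> RV \<and> (z, c) \<in> RV"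
      then obtain z where "(v, z) \<in> A\<^sup>+" "(z, c) \<in> A\<^sup>+" using RV_iff by blast
      then have "(z, c) \<in> A\<^sup>+" "(c, z) \<in> A\<^sup>*" using above by auto
      then have "(c, c) \<in> A\<^sup>+" using rtrancl_trancl_trancl by fast
      then show False using irrA by blast
    qed
    ultimately show "(v, w) \<in> E" using E_iff \<open>w = c\<close> by blast
  qed
  then show ?thesis by blast
qed

lemma E_X_out: "x \<in> X \<Longrightarrow> (x, w) \<notin> E" using E_A X_outt by blast

lemma E_out_ex: "v \<in> W \<Longrightarrow> v \<notin> X \<Longrightarrow> v \<noteq> R \<Longrightarrow> \<exists>w. (v, w) \<in> E"
proof -
  assume v: "v \<in> W" "v \<notin> X" "v \<noteq> R"
  have vV: "v \<in> V" using v W_V by blast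
  have "outdeg A v \<noteq> 0"
  proof
    assume "outdeg A v = 0"
    then have "indeg A v = 1" using types[OF vV v(3)] by auto
    then have "v \<in> X" using Xdef vV \<open>outdeg A v = 0\<close> by blast
    then show False using v by blast
  qed
  then obtain c where vc: "(v, c) \<in> A" using outdeg0 by auto
  have "c \<in> V" "c \<noteq> R" using vc AV R_noin by auto
  then obtain x where x: "x \<in> X" "(c, x) \<in> A\<^sup>*" using to_leaf by blast
  have "(v, x) \<in> A\<^sup>+" using vc x(2) by (rule rtrancl_into_trancl2)
  moreover have "x \<in> W" using x W_iff vis_X by blast
  ultimately have "(v, x) \<in> RV" using RV_iff v by blast
  then have "(v, x) \<in> E\<^sup>+" by (rule RV_Et)
  then show ?thesis using tranclD by fast
qed

end


lemma card_rel:
  assumes fin: "finite Sa"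
    and ex: "\<And>s. s \<in> Sa \<Longrightarrow> \<exists>!b. P s b"
    and inj: "\<And>s1 s2 b. s1 \<in> Sa \<Longrightarrow> s2 \<in> Sa \<Longrightarrow> P s1 b \<Longrightarrow> P s2 b \<Longrightarrow> s1 = s2"
  shows "card {b. \<exists>s\<in>Sa. P s b} = card Sa"
proof -
  define f where "f s = (THE b. P s b)" for s
  have Pf: "P s (f s)" if "s \<in> Sa" for s
    unfolding f_def using theI'[OF ex[OF that]] .
  have Pu: "P s b \<Longrightarrow> b = f s" if "s \<in> Sa" for s b
    using ex[OF that] Pf[OF that] by blast
  have "{b. \<exists>s\<in>Sa. P s b} = f ` Sa"
  proof
    show "{b. \<exists>s\<in>Sa. P s b} \<subseteq> f ` Sa" using Pu by blast
    show "f ` Sa \<subseteq> {b. \<exists>s\<in>Sa. P s b}" using Pf by blast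
  qed
  moreover have "inj_on f Sa"
  proof (rule inj_onI)
    fix s1 s2 assume "s1 \<in> Sa" "s2 \<in> Sa" "f s1 = f s2"
    then show "s1 = s2" using inj Pf by metis
  qed
  ultimately show ?thesis by (simp add: card_image)
qed

context PN begin

abbreviation "S \<equiv> {(x, y) \<in> E. subdividing E y}"
abbreviation "T \<equiv> {(x, y) \<in> E. subdividing E x}"

lemma fin_predE: "finite {u. (u, v) \<in> E}"
proof (rule finite_subset[OF _ finV])
  show "{u. (u, v) \<in> E} \<subseteq> V" using E_W W_V by blast
qed
lemma fin_succE: "finite {u. (v, u) \<in> E}"
proof (rule finite_subset[OF _ finV])
  show "{u. (v, u) \<in> E} \<subseteq> V" using E_W W_V by blast
qed

lemma sub_pred: assumes "subdividing E y" "(u, y) \<in> E" "(u', y) \<in> E" shows "u = u'"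
proof -
  have "card {u. (u, y) \<in> E} = 1" using assms(1) unfolding subdividing_def indeg_def by simp
  then show ?thesis by (rule card1_unique) (use assms in simp_all)
qed
lemma sub_succ: assumes "subdividing E y" "(y, u) \<in> E" "(y, u') \<in> E" shows "u = u'"
proof -
  have "card {u. (y, u) \<in> E} = 1" using assms(1) unfolding subdividing_def outdeg_def by simp
  then show ?thesis by (rule card1_unique) (use assms in simp_all)
qed
lemma sub_has_succ: assumes "subdividing E y" shows "\<exists>z. (y, z) \<in> E"
proof -
  have "card {u. (y, u) \<in> E} = 1" using assms(1) unfolding subdividing_def outdeg_def by simp
  then obtain z where "{u. (y, u) \<in> E} = {z}" by (rule card_1_singletonE)
  then show ?thesis by blast
qed
lemma sub_has_pred: assumes "subdividing E y" shows "\<exists>z. (z, y) \<in> E"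
proof -
  have "card {u. (u, y) \<in> E} = 1" using assms(1) unfolding subdividing_def indeg_def by simp
  then obtain z where "{u. (u, y) \<in> E} = {z}" by (rule card_1_singletonE)
  then show ?thesis by blast
qed

lemma T_sub: "T \<subseteq> E" by auto
lemma S_sub: "S \<subseteq> E" by auto
lemma Trt_E: "(a, b) \<in> T\<^sup>* \<Longrightarrow> (a, b) \<in> E\<^sup>*"
  by (rule subsetD[OF rtrancl_mono[OF T_sub]])
lemma Srt_E: "(a, b) \<in> S\<^sup>* \<Longrightarrow> (a, b) \<in> E\<^sup>*"
  by (rule subsetD[OF rtrancl_mono[OF S_sub]])
lemma St_E: "(a, b) \<in> S\<^sup>+ \<Longrightarrow> (a, b) \<in> E\<^sup>+"
  by (rule trancl_mono[OF _ S_sub])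
lemma Tt_E: "(a, b) \<in> T\<^sup>+ \<Longrightarrow> (a, b) \<in> E\<^sup>+"
  by (rule trancl_mono[OF _ T_sub])

lemma T_sv: "single_valued T"
  unfolding single_valued_def by (auto intro: sub_succ)
lemma S_conv_sv: "single_valued (S\<inverse>)"
  unfolding single_valued_def by (auto intro: sub_pred)

lemma Ert_W: "(s, b) \<in> E\<^sup>* \<Longrightarrow> s \<in> W \<Longrightarrow> b \<in> W"
  by (erule rtranclE) (use E_W in auto)

lemma indegE_R: "indeg E R = 0"
  unfolding indeg_def using E_noin_R by simp

lemma summary:
  assumes v: "v \<in> W" "v \<noteq> R"
  shows "(v \<in> X \<and> indeg E v = 1 \<and> outdeg E v = 0) \<or>
         (v \<notin> X \<and> indeg E v \<ge> 1 \<and> outdeg E v \<ge> 1 \<and> (indeg E v = 1 \<or> outdeg E v = 1))"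
proof (cases "v \<in> X")
  case True
  have "indeg A v = 1" using True Xdef by blast
  then obtain p where "{u. (u, v) \<in> E} = {p}" using E_pred1 v by blast
  then have "indeg E v = 1" unfolding indeg_def by simp
  moreover have "outdeg E v = 0" unfolding outdeg_def using E_X_out[OF True] by simp
  ultimately show ?thesis using True by blast
next
  case False
  have vV: "v \<in> V" using v W_V by blast
  obtain u where "(u, v) \<in> E" using E_in_ex v by blast
  then have i1: "indeg E v \<ge> 1" unfolding indeg_def using fin_predE
    by (metis (mono_tags, lifting) One_nat_def Suc_leI card_gt_0_iff empty_Collect_eq)
  obtain w where "(v, w) \<in> E" using E_out_ex v False by blast
  then have o1: "outdeg E v \<ge> 1" unfolding outdeg_def using fin_succE
    by (metis (mono_tags, lifting) One_nat_def Suc_leI card_gt_0_iff empty_Collect_eq)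
  have "indeg E v = 1 \<or> outdeg E v = 1"
  proof -
    have "indeg A v \<noteq> 0" using R_uniq vV v(2) by blast
    from types[OF vV v(2)] have "indeg A v = 1 \<or> outdeg A v = 1"
    proof (elim disjE)
      assume "indeg A v = 1 \<and> outdeg A v = 0"
      then have "v \<in> X" using Xdef vV by blast
      then show ?thesis using False by blast
    qed auto
    then show ?thesis
    proof
      assume "indeg A v = 1"
      then obtain p where "{u. (u, v) \<in> E} = {p}" using E_pred1 v by blast
      then show ?thesis unfolding indeg_def by simp
    next
      assume "outdeg A v = 1"
      then obtain c where "{u. (v, u) \<in> E} = {c}" using E_succ1 v False by blast
      then show ?thesis unfolding outdeg_def by simp
    qed
  qed
  then show ?thesis using False i1 o1 by blast
qed

lemma M:
  assumes yb: "(y, b) \<in> E"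
  shows "(x, b) \<in> (av E y)\<^sup>* \<Longrightarrow> (x, b) \<in> (av A y)\<^sup>*"
proof (induction rule: converse_rtrancl_induct)
  case base then show ?case by simp
next
  case (step x m)
  have xm: "(x, m) \<in> E" "x \<noteq> y" "m \<noteq> y" using step.hyps(1) by (auto simp: av_def)
  have xmA: "(x, m) \<in> A\<^sup>*" using E_A[OF xm(1)] by (rule trancl_into_rtrancl)
  have "(x, m) \<in> (av A y)\<^sup>*"
  proof (cases "(y, m) \<in> A\<^sup>*")
    case False then show ?thesis using K1[OF xmA] by simp
  next
    case True
    then have ym: "(y, m) \<in> A\<^sup>+" using rtranclD[OF True] xm(3) by auto
    have "(m, b) \<in> A\<^sup>*" using Ert_A[OF av_rt_sub[OF step.hyps(2)]] .
    have mb: "m = b"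
    proof (rule ccontr)
      assume "m \<noteq> b"
      then have "(m, b) \<in> A\<^sup>+" using rtranclD[OF \<open>(m, b) \<in> A\<^sup>*\<close>] by auto
      then have "(m, b) \<in> RV" using RV_iff E_W xm(1) yb by blast
      moreover have "(y, m) \<in> RV" using RV_iff E_W xm(1) yb ym by blast
      ultimately show False using yb E_iff by blast
    qed
    have "(x, y) \<notin> A\<^sup>*"
    proof
      assume "(x, y) \<in> A\<^sup>*"
      then have "(x, y) \<in> A\<^sup>+" using rtranclD xm(2) by metis
      then have "(x, y) \<in> RV" using RV_iff E_W xm(1) yb by blast
      moreover have "(y, b) \<in> RV" using yb E_RV by blast
      ultimately show False using xm(1) mb E_iff by blast
    qed
    then show ?thesis using K2[OF xmA] by simp
  qed
  then show ?case using step.IH by (rule rtrancl_trans)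
qed

lemma Q:
  assumes yW: "y \<in> W" and ys: "subdividing E y" and yb: "(y, b) \<in> E" and ay: "(a, y) \<in> RV"
  shows "(a, b) \<notin> (av E y)\<^sup>*"
proof
  assume ab: "(a, b) \<in> (av E y)\<^sup>*"
  have "y \<noteq> R" using ys indegE_R unfolding subdividing_def by auto
  then obtain x where x: "x \<in> X" "(R, x) \<notin> (av A y)\<^sup>*"
    using yW W_iff visible_iff by blast
  have xV: "x \<in> V" using x X_V by blast
  have yx: "(y, x) \<in> A\<^sup>*" using vis_below[OF x(2) xV] .
  have "x \<noteq> y" using x(1) E_X_out yb by blast
  then have "(y, x) \<in> A\<^sup>+" using rtranclD[OF yx] by auto
  moreover have "x \<in> W" using x(1) W_iff vis_X by blast
  ultimately have "(y, x) \<in> RV" using RV_iff yW by blast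
  then have "(y, x) \<in> E\<^sup>+" by (rule RV_Et)
  then obtain m where ym: "(y, m) \<in> E" and mx: "(m, x) \<in> E\<^sup>*" using tranclD by fast
  have "m = b" using sub_succ[OF ys ym yb] .
  then have bx: "(b, x) \<in> A\<^sup>*" using Ert_A[OF mx] by simp
  have ybA: "(y, b) \<in> A\<^sup>+" using E_A[OF yb] .
  have "(b, y) \<notin> A\<^sup>*"
  proof
    assume "(b, y) \<in> A\<^sup>*"
    then have "(y, y) \<in> A\<^sup>+" using ybA by (rule trancl_rtrancl_trancl[rotated])
    then show False using irrA by blast
  qed
  then have bx': "(b, x) \<in> (av A y)\<^sup>*" using K2[OF bx] by simp
  have ayA: "(a, y) \<in> A\<^sup>+" using ay RV_iff by blast
  have "(y, a) \<notin> A\<^sup>*"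
  proof
    assume "(y, a) \<in> A\<^sup>*"
    then have "(y, y) \<in> A\<^sup>+" using ayA by (rule rtrancl_trancl_trancl)
    then show False using irrA by blast
  qed
  moreover have "(R, a) \<in> A\<^sup>*" using rt_R W_V ay RV_iff by blast
  ultimately have Ra: "(R, a) \<in> (av A y)\<^sup>*" using K1 by blast
  have "(a, b) \<in> (av A y)\<^sup>*" using M[OF yb ab] .
  then have "(R, x) \<in> (av A y)\<^sup>*" using Ra bx' by (meson rtrancl_trans)
  then show False using x(2) by blast
qed

lemma PathSplit: "(x, w) \<in> E\<^sup>* \<Longrightarrow> (x, w) \<in> (av E y)\<^sup>* \<or> ((x, y) \<in> E\<^sup>* \<and> (y, w) \<in> E\<^sup>*)"
proof (induction rule: rtrancl_induct)
  case base then show ?case by simp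
next
  case (step m w)
  from step.IH show ?case
  proof
    assume xm: "(x, m) \<in> (av E y)\<^sup>*"
    show ?case
    proof (cases "m = y")
      case True
      have "(x, y) \<in> (av E y)\<^sup>*" using xm True by simp
      then have "x = y" by (rule av_to_v)
      then show ?thesis using True step.hyps(2) by auto
    next
      case False
      show ?thesis
      proof (cases "w = y")
        case True
        have "(x, m) \<in> E\<^sup>*" using av_rt_sub[OF xm] .
        then have "(x, w) \<in> E\<^sup>*" using step.hyps(2) by (rule rtrancl_into_rtrancl)
        then show ?thesis using True by auto
      next
        case False2: False
        have "(m, w) \<in> av E y" using step.hyps(2) False False2 by (auto simp: av_def)
        from rtrancl_into_rtrancl[OF xm this] show ?thesis by (rule disjI1)
      qed
    qed
  next
    assume H: "(x, y) \<in> E\<^sup>* \<and> (y, m) \<in> E\<^sup>*"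
    then have "(y, w) \<in> E\<^sup>*" using step.hyps(2) by (meson rtrancl.rtrancl_into_rtrancl)
    then show ?case using H by simp
  qed
qed

lemma RV_Ert: "(u, v) \<in> RV \<Longrightarrow> (u, v) \<in> E\<^sup>*"
  by (rule trancl_into_rtrancl[OF RV_Et])

lemma lemI:
  assumes as: "(a, s) \<in> E"
  shows "(s, b) \<in> T\<^sup>* \<Longrightarrow> (a, z) \<in> RV \<Longrightarrow> (z, b) \<in> RV \<Longrightarrow> (s, z) \<in> T\<^sup>*"
proof (induction arbitrary: z rule: rtrancl_induct)
  case base
  then show ?case using as E_iff by blast
next
  case (step y b)
  have yb: "(y, b) \<in> E" and ys: "subdividing E y" using step.hyps(2) by auto
  have yW: "y \<in> W" using E_W yb by blast
  have "(a, y) \<in> E\<^sup>+" using as Trt_E[OF step.hyps(1)] by (rule rtrancl_into_trancl2)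
  then have ay: "(a, y) \<in> RV" by (rule Et_RV)
  have nab: "(a, b) \<notin> (av E y)\<^sup>*" using Q[OF yW ys yb ay] .
  have az: "(a, z) \<in> E\<^sup>*" using RV_Ert[OF step.prems(1)] .
  have zb: "(z, b) \<in> E\<^sup>*" using RV_Ert[OF step.prems(2)] .
  show ?case
  proof (cases "z = y")
    case True then show ?thesis using step.hyps(1) by simp
  next
    case False
    have c1: "(a, z) \<in> (av E y)\<^sup>* \<or> (y, z) \<in> E\<^sup>*" using PathSplit[OF az, of y] by blast
    have c2: "(z, b) \<in> (av E y)\<^sup>* \<or> (z, y) \<in> E\<^sup>*" using PathSplit[OF zb, of y] by blast
    show ?thesis
    proof (cases "(y, z) \<in> E\<^sup>*")
      case True
      then have "(y, z) \<in> E\<^sup>+" using rtranclD[OF True] False by auto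
      then have "(y, z) \<in> RV" by (rule Et_RV)
      then show ?thesis using step.prems(2) yb E_iff by blast
    next
      case nyz: False
      show ?thesis
      proof (cases "(z, y) \<in> E\<^sup>*")
        case True
        then have "(z, y) \<in> E\<^sup>+" using rtranclD[OF True] False by auto
        then have "(z, y) \<in> RV" by (rule Et_RV)
        then show ?thesis using step.IH step.prems(1) by blast
      next
        case False2: False
        have "(a, z) \<in> (av E y)\<^sup>*" using c1 nyz by blast
        moreover have "(z, b) \<in> (av E y)\<^sup>*" using c2 False2 by blast
        ultimately have "(a, b) \<in> (av E y)\<^sup>*" by (rule rtrancl_trans)
        then show ?thesis using nab by blast
      qed
    qed
  qed
qed

lemma T_src: assumes "(z, m) \<in> T\<^sup>+" shows "subdividing E z"
proof -
  obtain m' where "(z, m') \<in> T" using tranclD[OF assms] by blast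
  then show ?thesis by simp
qed
lemma S_tgt: assumes "(z, m) \<in> S\<^sup>+" shows "subdividing E m"
proof -
  obtain m' where "(m', m) \<in> S" using tranclD2[OF assms] by blast
  then show ?thesis by simp
qed

lemma lemI_sub:
  assumes as: "(a, s) \<in> E" and sb: "(s, b) \<in> T\<^sup>*" and az: "(a, z) \<in> RV" and zb: "(z, b) \<in> RV"
  shows "subdividing E z"
proof -
  have sz: "(s, z) \<in> T\<^sup>*" using lemI[OF as sb az zb] .
  from single_valued_confluent[OF T_sv sz sb]
  have "(z, b) \<in> T\<^sup>* \<or> (b, z) \<in> T\<^sup>*" .
  moreover have "(b, z) \<notin> T\<^sup>*"
  proof
    assume "(b, z) \<in> T\<^sup>*"
    then have "(b, z) \<in> A\<^sup>*" using Ert_A[OF Trt_E] by blast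
    moreover have "(z, b) \<in> A\<^sup>+" using zb RV_iff by blast
    ultimately have "(z, z) \<in> A\<^sup>+" by (rule trancl_rtrancl_trancl[rotated])
    then show False using irrA by blast
  qed
  ultimately have zbT: "(z, b) \<in> T\<^sup>*" by blast
  moreover have "z \<noteq> b" using zb RV_irr by blast
  ultimately have "(z, b) \<in> T\<^sup>+" using rtranclD[OF zbT] by auto
  then show ?thesis by (rule T_src)
qed

end


context PN begin

abbreviation "NV \<equiv> normV X V A"
abbreviation "NA \<equiv> normA X V A"

lemma NV_iff: "v \<in> NV \<longleftrightarrow> v \<in> W \<and> \<not> subdividing E v"
  unfolding normV_def suppV_def by simp

lemma NA_iff: "(a, b) \<in> NA \<longleftrightarrow> a \<in> NV \<and> b \<in> NV \<and> (a, b) \<in> S\<^sup>* O E"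
  unfolding normA_def suppA_def normV_def by simp

lemma Splus: "(a, p) \<in> S\<^sup>+ \<Longrightarrow> \<exists>s. (a, s) \<in> E \<and> (s, p) \<in> T\<^sup>*"
proof (induction rule: trancl_induct)
  case (base y) then show ?case by auto
next
  case (step y z)
  then obtain s where s: "(a, s) \<in> E" "(s, y) \<in> T\<^sup>*" by blast
  have "subdividing E y" by (rule S_tgt[OF step.hyps(1)])
  then have "(y, z) \<in> T" using step.hyps(2) by simp
  then have "(s, z) \<in> T\<^sup>*" using s(2) by (meson rtrancl.rtrancl_into_rtrancl)
  then show ?case using s(1) by blast
qed

lemma SE_to: assumes "(a, b) \<in> S\<^sup>* O E" shows "\<exists>s. (a, s) \<in> E \<and> (s, b) \<in> T\<^sup>*"
proof -
  obtain p where ap: "(a, p) \<in> S\<^sup>*" and pb: "(p, b) \<in> E" using assms by blast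
  show ?thesis
  proof (cases "a = p")
    case True then show ?thesis using pb by blast
  next
    case False
    then have ap': "(a, p) \<in> S\<^sup>+" using rtranclD[OF ap] by auto
    obtain s where s: "(a, s) \<in> E" "(s, p) \<in> T\<^sup>*" using Splus[OF ap'] by blast
    have "subdividing E p" by (rule S_tgt[OF ap'])
    then have "(p, b) \<in> T" using pb by simp
    then have "(s, b) \<in> T\<^sup>*" using s(2) by (meson rtrancl.rtrancl_into_rtrancl)
    then show ?thesis using s(1) by blast
  qed
qed

lemma SE_from: "(s, b) \<in> T\<^sup>* \<Longrightarrow> (a, s) \<in> E \<Longrightarrow> (a, b) \<in> S\<^sup>* O E"
proof (induction arbitrary: a rule: converse_rtrancl_induct)
  case base then show ?case by blast
next
  case (step s y)
  have sy: "(s, y) \<in> E" and ss: "subdividing E s" using step.hyps(1) by auto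
  have "(s, b) \<in> S\<^sup>* O E" using step.IH[OF sy] .
  then obtain p where sp: "(s, p) \<in> S\<^sup>*" and pb: "(p, b) \<in> E" by blast
  have "(a, s) \<in> S" using step.prems ss by simp
  then have "(a, p) \<in> S\<^sup>*" using sp by (rule converse_rtrancl_into_rtrancl)
  then show ?case using pb by blast
qed

lemma NA_RV: "(a, b) \<in> NA \<Longrightarrow> (a, b) \<in> RV"
proof -
  assume "(a, b) \<in> NA"
  then have "(a, b) \<in> S\<^sup>* O E" using NA_iff by blast
  then obtain p where ap: "(a, p) \<in> S\<^sup>*" and pb: "(p, b) \<in> E" by blast
  have "(a, b) \<in> E\<^sup>+" using Srt_E[OF ap] pb by (rule rtrancl_into_trancl1)
  then show ?thesis by (rule Et_RV)
qed

lemma NAt_RV: "(a, b) \<in> NA\<^sup>+ \<Longrightarrow> (a, b) \<in> RV"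
proof (induction rule: trancl_induct)
  case (base y) then show ?case by (rule NA_RV)
next
  case (step y z) then show ?case using transD[OF RV_trans step.IH NA_RV[OF step.hyps(2)]] by simp
qed

lemma partA: "\<forall>e \<in> NA. e \<notin> NA O NA\<^sup>+"
proof (intro ballI notI)
  fix e assume e: "e \<in> NA" "e \<in> NA O NA\<^sup>+"
  obtain u v where uv: "e = (u, v)" by (cases e)
  obtain w where uw: "(u, w) \<in> NA" and wv: "(w, v) \<in> NA\<^sup>+" using e(2) uv by blast
  have "(u, v) \<in> S\<^sup>* O E" using e(1) uv NA_iff by blast
  then obtain s where s: "(u, s) \<in> E" "(s, v) \<in> T\<^sup>*" using SE_to by blast
  have "subdividing E w" using lemI_sub[OF s NA_RV[OF uw] NAt_RV[OF wv]] .
  moreover have "w \<in> NV" using uw NA_iff by blast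
  ultimately show False using NV_iff by blast
qed

lemma T_fin: "finite T" using finite_subset[OF T_sub E_fin] .
lemma S_fin: "finite S" using finite_subset[OF S_sub E_fin] .
lemma T_acyc: "acyclic T" using acyclic_subset[OF E_acyc T_sub] .
lemma S_acyc: "acyclic S" using acyclic_subset[OF E_acyc S_sub] .

lemma endT_ex: "s \<in> W \<Longrightarrow> \<exists>b. (s, b) \<in> T\<^sup>* \<and> b \<in> W \<and> \<not> subdividing E b"
proof (induction s rule: wf_induct[OF finite_acyclic_wf_converse[OF T_fin T_acyc]])
  case (1 s)
  show ?case
  proof (cases "subdividing E s")
    case False then show ?thesis using 1 by blast
  next
    case True
    obtain z where sz: "(s, z) \<in> E" using sub_has_succ[OF True] by blast
    then have szT: "(s, z) \<in> T" using True by simp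
    have "z \<in> W" using E_W sz by blast
    then obtain b where b: "(z, b) \<in> T\<^sup>*" "b \<in> W" "\<not> subdividing E b" using 1 szT by blast
    have "(s, b) \<in> T\<^sup>*" using szT b(1) by (rule converse_rtrancl_into_rtrancl)
    then show ?thesis using b by blast
  qed
qed

lemma endT_uniq:
  assumes "(s, b1) \<in> T\<^sup>*" "(s, b2) \<in> T\<^sup>*" "\<not> subdividing E b1" "\<not> subdividing E b2"
  shows "b1 = b2"
proof (rule ccontr)
  assume ne: "b1 \<noteq> b2"
  from single_valued_confluent[OF T_sv assms(1,2)]
  show False
  proof
    assume h: "(b1, b2) \<in> T\<^sup>*"
    then have "(b1, b2) \<in> T\<^sup>+" using rtranclD[OF h] ne by auto
    then show False using T_src assms(3) by blast
  next
    assume h: "(b2, b1) \<in> T\<^sup>*"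
    then have "(b2, b1) \<in> T\<^sup>+" using rtranclD[OF h] ne by auto
    then show False using T_src assms(4) by blast
  qed
qed

lemma startS_ex: "p \<in> W \<Longrightarrow> \<exists>a. (a, p) \<in> S\<^sup>* \<and> a \<in> W \<and> \<not> subdividing E a"
proof (induction p rule: wf_induct[OF finite_acyclic_wf[OF S_fin S_acyc]])
  case (1 p)
  show ?case
  proof (cases "subdividing E p")
    case False then show ?thesis using 1 by blast
  next
    case True
    obtain z where zp: "(z, p) \<in> E" using sub_has_pred[OF True] by blast
    then have zpS: "(z, p) \<in> S" using True by simp
    have "z \<in> W" using E_W zp by blast
    then obtain a where a: "(a, z) \<in> S\<^sup>*" "a \<in> W" "\<not> subdividing E a" using 1 zpS by blast
    have "(a, p) \<in> S\<^sup>*" using a(1) zpS by (rule rtrancl_into_rtrancl)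
    then show ?thesis using a by blast
  qed
qed

lemma startS_uniq:
  assumes "(a1, p) \<in> S\<^sup>*" "(a2, p) \<in> S\<^sup>*" "\<not> subdividing E a1" "\<not> subdividing E a2"
  shows "a1 = a2"
proof (rule ccontr)
  assume ne: "a1 \<noteq> a2"
  have h1: "(p, a1) \<in> (S\<inverse>)\<^sup>*" using assms(1) by (rule rtrancl_converseI)
  have h2: "(p, a2) \<in> (S\<inverse>)\<^sup>*" using assms(2) by (rule rtrancl_converseI)
  from single_valued_confluent[OF S_conv_sv h1 h2]
  show False
  proof
    assume "(a1, a2) \<in> (S\<inverse>)\<^sup>*"
    then have h: "(a2, a1) \<in> S\<^sup>*" by (rule rtrancl_converseD)
    then have "(a2, a1) \<in> S\<^sup>+" using rtranclD[OF h] ne by auto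
    then show False using S_tgt assms(3) by blast
  next
    assume "(a2, a1) \<in> (S\<inverse>)\<^sup>*"
    then have h: "(a1, a2) \<in> S\<^sup>*" by (rule rtrancl_converseD)
    then have "(a1, a2) \<in> S\<^sup>+" using rtranclD[OF h] ne by auto
    then show False using S_tgt assms(4) by blast
  qed
qed

lemma KPo:
  assumes as1: "(a, s1) \<in> E" and s1b: "(s1, b) \<in> T\<^sup>*" and as2: "(a, s2) \<in> E" and s2b: "(s2, b) \<in> T\<^sup>*"
    and ne: "s2 \<noteq> b" "s1 \<noteq> s2"
  shows False
proof -
  have s2b': "(s2, b) \<in> T\<^sup>+" using rtranclD[OF s2b] ne by auto
  have s2s: "subdividing E s2" using T_src[OF s2b'] .
  have r1: "(s2, b) \<in> RV" using Et_RV[OF Tt_E[OF s2b']] .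
  have r2: "(a, s2) \<in> RV" using E_RV[OF as2] .
  have h: "(s1, s2) \<in> T\<^sup>*" by (rule lemI[OF as1 s1b r2 r1])
  then have "(s1, s2) \<in> T\<^sup>+" using rtranclD[OF h] ne by auto
  then obtain y where s1y: "(s1, y) \<in> T\<^sup>*" and ys2: "(y, s2) \<in> T" using tranclD2 by fast
  have "y = a" using sub_pred[OF s2s _ as2] ys2 by simp
  then have "(s1, a) \<in> E\<^sup>*" using Trt_E[OF s1y] by simp
  then have "(a, a) \<in> E\<^sup>+" by (rule rtrancl_into_trancl2[OF as1])
  then show False using E_irr by blast
qed

lemma KP_out:
  assumes "(a, s1) \<in> E" "(s1, b) \<in> T\<^sup>*" "(a, s2) \<in> E" "(s2, b) \<in> T\<^sup>*"
  shows "s1 = s2"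
proof (rule ccontr)
  assume ne: "s1 \<noteq> s2"
  show False
  proof (cases "s2 = b")
    case False show False by (rule KPo[OF assms False ne])
  next
    case True
    then have "s1 \<noteq> b" using ne by simp
    then show False using KPo[OF assms(3,4,1,2)] ne by simp
  qed
qed

lemma KPi:
  assumes p1b: "(p1, b) \<in> E" and p2b: "(p2, b) \<in> E" and ap1: "(a, p1) \<in> S\<^sup>*" and ap2: "(a, p2) \<in> S\<^sup>*"
    and ne: "p1 \<noteq> a" "p1 \<noteq> p2"
  shows False
proof -
  have ap1': "(a, p1) \<in> S\<^sup>+" using rtranclD[OF ap1] ne by auto
  have p1s: "subdividing E p1" using S_tgt[OF ap1'] .
  obtain s1 where as1: "(a, s1) \<in> E" and s1p1: "(s1, p1) \<in> T\<^sup>*" using Splus[OF ap1'] by blast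
  have "(p1, b) \<in> T" using p1b p1s by simp
  then have s1b: "(s1, b) \<in> T\<^sup>*" using s1p1 by (meson rtrancl.rtrancl_into_rtrancl)
  have ap1R: "(a, p1) \<in> RV" using Et_RV[OF St_E[OF ap1']] .
  have p1bR: "(p1, b) \<in> RV" using E_RV[OF p1b] .
  show False
  proof (cases "p2 = a")
    case True
    then have "(a, b) \<in> E" using p2b by simp
    then show False using ap1R p1bR E_iff by blast
  next
    case False
    have ap2': "(a, p2) \<in> S\<^sup>+" using rtranclD[OF ap2] False by auto
    have "(a, p2) \<in> RV" using Et_RV[OF St_E[OF ap2']] .
    moreover have "(p2, b) \<in> RV" using E_RV[OF p2b] .
    ultimately have s1p2: "(s1, p2) \<in> T\<^sup>*" by (rule lemI[OF as1 s1b])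
    from single_valued_confluent[OF T_sv s1p1 s1p2]
    show False
    proof
      assume h: "(p1, p2) \<in> T\<^sup>*"
      then have "(p1, p2) \<in> T\<^sup>+" using rtranclD[OF h] ne by auto
      then obtain m where p1m: "(p1, m) \<in> T" and mp2: "(m, p2) \<in> T\<^sup>*" using tranclD by fast
      have "m = b" using sub_succ[OF p1s _ p1b] p1m by simp
      then have "(b, p2) \<in> E\<^sup>*" using Trt_E[OF mp2] by simp
      then have "(b, b) \<in> E\<^sup>+" using p2b by (rule rtrancl_into_trancl1)
      then show False using E_irr by blast
    next
      assume h: "(p2, p1) \<in> T\<^sup>*"
      then have "(p2, p1) \<in> T\<^sup>+" using rtranclD[OF h] ne by auto
      then obtain m where p2m: "(p2, m) \<in> T" and mp1: "(m, p1) \<in> T\<^sup>*" using tranclD by fast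
      have p2s: "subdividing E p2" using p2m by simp
      have "m = b" using sub_succ[OF p2s _ p2b] p2m by simp
      then have "(b, p1) \<in> E\<^sup>*" using Trt_E[OF mp1] by simp
      then have "(b, b) \<in> E\<^sup>+" using p1b by (rule rtrancl_into_trancl1)
      then show False using E_irr by blast
    qed
  qed
qed

lemma KP_in:
  assumes "(p1, b) \<in> E" "(p2, b) \<in> E" "(a, p1) \<in> S\<^sup>*" "(a, p2) \<in> S\<^sup>*"
  shows "p1 = p2"
proof (rule ccontr)
  assume ne: "p1 \<noteq> p2"
  show False
  proof (cases "p1 = a")
    case False show False by (rule KPi[OF assms False ne])
  next
    case True
    then have "p2 \<noteq> a" using ne by simp
    then show False using KPi[OF assms(2,1,4,3)] ne by simp
  qed
qed

lemma out_eq: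
  assumes a: "a \<in> NV"
  shows "outdeg NA a = outdeg E a"
proof -
  have "{b. (a, b) \<in> NA} = {b. \<exists>s\<in>{s. (a, s) \<in> E}. (s, b) \<in> T\<^sup>* \<and> b \<in> W \<and> \<not> subdividing E b}"
  proof (intro set_eqI iffI)
    fix b assume "b \<in> {b. (a, b) \<in> NA}"
    then have ab: "(a, b) \<in> NA" by simp
    then have "b \<in> W" "\<not> subdividing E b" using NA_iff NV_iff by blast+
    moreover obtain s where "(a, s) \<in> E" "(s, b) \<in> T\<^sup>*" using SE_to ab NA_iff by blast
    ultimately show "b \<in> {b. \<exists>s\<in>{s. (a, s) \<in> E}. (s, b) \<in> T\<^sup>* \<and> b \<in> W \<and> \<not> subdividing E b}" by blast
  next
    fix b assume "b \<in> {b. \<exists>s\<in>{s. (a, s) \<in> E}. (s, b) \<in> T\<^sup>* \<and> b \<in> W \<and> \<not> subdividing E b}"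
    then obtain s where s: "(a, s) \<in> E" "(s, b) \<in> T\<^sup>*" "b \<in> W" "\<not> subdividing E b" by blast
    have "(a, b) \<in> S\<^sup>* O E" using SE_from[OF s(2,1)] .
    moreover have "b \<in> NV" using s NV_iff by blast
    ultimately show "b \<in> {b. (a, b) \<in> NA}" using a NA_iff by blast
  qed
  also have "card \<dots> = card {s. (a, s) \<in> E}"
  proof (rule card_rel[OF fin_succE])
    fix s assume "s \<in> {s. (a, s) \<in> E}"
    then have "s \<in> W" using E_W by blast
    then obtain b where b: "(s, b) \<in> T\<^sup>*" "b \<in> W" "\<not> subdividing E b" using endT_ex by blast
    then show "\<exists>!b. (s, b) \<in> T\<^sup>* \<and> b \<in> W \<and> \<not> subdividing E b"
      using endT_uniq by blast
  next
    fix s1 s2 b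
    assume "s1 \<in> {s. (a, s) \<in> E}" "s2 \<in> {s. (a, s) \<in> E}"
      "(s1, b) \<in> T\<^sup>* \<and> b \<in> W \<and> \<not> subdividing E b" "(s2, b) \<in> T\<^sup>* \<and> b \<in> W \<and> \<not> subdividing E b"
    then show "s1 = s2" using KP_out by blast
  qed
  finally show ?thesis unfolding outdeg_def .
qed

lemma in_eq:
  assumes b: "b \<in> NV"
  shows "indeg NA b = indeg E b"
proof -
  have "{a. (a, b) \<in> NA} = {a. \<exists>p\<in>{p. (p, b) \<in> E}. (a, p) \<in> S\<^sup>* \<and> a \<in> W \<and> \<not> subdividing E a}"
  proof (intro set_eqI iffI)
    fix a assume "a \<in> {a. (a, b) \<in> NA}"
    then have ab: "(a, b) \<in> NA" by simp
    then have "a \<in> W" "\<not> subdividing E a" using NA_iff NV_iff by blast+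
    moreover obtain p where "(a, p) \<in> S\<^sup>*" "(p, b) \<in> E" using ab NA_iff by blast
    ultimately show "a \<in> {a. \<exists>p\<in>{p. (p, b) \<in> E}. (a, p) \<in> S\<^sup>* \<and> a \<in> W \<and> \<not> subdividing E a}" by blast
  next
    fix a assume "a \<in> {a. \<exists>p\<in>{p. (p, b) \<in> E}. (a, p) \<in> S\<^sup>* \<and> a \<in> W \<and> \<not> subdividing E a}"
    then obtain p where p: "(p, b) \<in> E" "(a, p) \<in> S\<^sup>*" "a \<in> W" "\<not> subdividing E a" by blast
    have "(a, b) \<in> S\<^sup>* O E" using p(1,2) by blast
    moreover have "a \<in> NV" using p NV_iff by blast
    ultimately show "a \<in> {a. (a, b) \<in> NA}" using b NA_iff by blast
  qed
  also have "card \<dots> = card {p. (p, b) \<in> E}"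
  proof (rule card_rel[OF fin_predE])
    fix p assume "p \<in> {p. (p, b) \<in> E}"
    then have "p \<in> W" using E_W by blast
    then obtain a where a: "(a, p) \<in> S\<^sup>*" "a \<in> W" "\<not> subdividing E a" using startS_ex by blast
    then show "\<exists>!a. (a, p) \<in> S\<^sup>* \<and> a \<in> W \<and> \<not> subdividing E a"
      using startS_uniq by blast
  next
    fix p1 p2 a
    assume "p1 \<in> {p. (p, b) \<in> E}" "p2 \<in> {p. (p, b) \<in> E}"
      "(a, p1) \<in> S\<^sup>* \<and> a \<in> W \<and> \<not> subdividing E a" "(a, p2) \<in> S\<^sup>* \<and> a \<in> W \<and> \<not> subdividing E a"
    then show "p1 = p2" using KP_in by blast
  qed
  finally show ?thesis unfolding indeg_def .
qed

end


context PN begin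

lemma R_NV: "R \<in> NV"
  using NV_iff R_W indegE_R unfolding subdividing_def by simp

lemma NV_W: "v \<in> NV \<Longrightarrow> v \<in> W" using NV_iff by blast

lemma partB: "phylo_network X NV NA"
  unfolding phylo_network_def
proof (intro conjI)
  show "finite NV"
    by (rule finite_subset[OF _ finV]) (use NV_W W_V in blast)
  show "NA \<subseteq> NV \<times> NV"
  proof
    fix e assume "e \<in> NA"
    then show "e \<in> NV \<times> NV" using NA_iff by (cases e) simp
  qed
  show "acyclic NA" unfolding acyclic_def using NAt_RV RV_irr by blast
  show "\<exists>!\<rho>. \<rho> \<in> NV \<and> indeg NA \<rho> = 0"
  proof (rule ex1I[of _ R])
    show "R \<in> NV \<and> indeg NA R = 0" using R_NV in_eq[OF R_NV] indegE_R by simp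
  next
    fix v assume v: "v \<in> NV \<and> indeg NA v = 0"
    then have "indeg E v = 0" using in_eq[of v] by simp
    show "v = R"
    proof (rule ccontr)
      assume "v \<noteq> R"
      from summary[OF NV_W this] v \<open>indeg E v = 0\<close> show False by auto
    qed
  qed
  show "\<forall>v\<in>NV. indeg NA v \<noteq> 0 \<longrightarrow>
        (indeg NA v = 1 \<and> outdeg NA v = 0) \<or>
        (indeg NA v = 1 \<and> outdeg NA v \<ge> 2) \<or>
        (outdeg NA v = 1 \<and> indeg NA v \<ge> 2)"
  proof (intro ballI impI)
    fix v assume v: "v \<in> NV" "indeg NA v \<noteq> 0"
    have i: "indeg NA v = indeg E v" and o: "outdeg NA v = outdeg E v" using in_eq[OF v(1)] out_eq[OF v(1)] by auto
    have "v \<noteq> R" using v i indegE_R by auto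
    have ns: "\<not> (indeg E v = 1 \<and> outdeg E v = 1)" using v NV_iff unfolding subdividing_def by blast
    from summary[OF NV_W[OF v(1)] \<open>v \<noteq> R\<close>] ns
    show "(indeg NA v = 1 \<and> outdeg NA v = 0) \<or>
        (indeg NA v = 1 \<and> outdeg NA v \<ge> 2) \<or>
        (outdeg NA v = 1 \<and> indeg NA v \<ge> 2)" unfolding i o by auto
  qed
  show "X = {v \<in> NV. indeg NA v = 1 \<and> outdeg NA v = 0}"
  proof (intro set_eqI iffI)
    fix x assume x: "x \<in> X"
    have xW: "x \<in> W" using x W_iff vis_X by blast
    have xR: "x \<noteq> R" using X_notR x by blast
    have d: "indeg E x = 1" "outdeg E x = 0" using summary[OF xW xR] x by auto
    then have xNV: "x \<in> NV" using NV_iff xW unfolding subdividing_def by simp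
    show "x \<in> {v \<in> NV. indeg NA v = 1 \<and> outdeg NA v = 0}"
      using xNV d in_eq[OF xNV] out_eq[OF xNV] by simp
  next
    fix v assume "v \<in> {v \<in> NV. indeg NA v = 1 \<and> outdeg NA v = 0}"
    then have v0: "v \<in> NV" "indeg NA v = 1" "outdeg NA v = 0" by auto
    then have v: "v \<in> NV" "indeg E v = 1" "outdeg E v = 0" using in_eq[OF v0(1)] out_eq[OF v0(1)] by auto
    have "v \<noteq> R" using v indegE_R by auto
    from summary[OF NV_W[OF v(1)] this] v show "v \<in> X" by auto
  qed
qed

end

theorem lemma2:
  fixes X V :: "'v set" and A :: "('v \<times> 'v) set"
  assumes "finite X" and "phylo_network X V A"
  shows "(\<forall>e \<in> normA X V A. e \<notin> normA X V A O (normA X V A)\<^sup>+)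
         \<and> phylo_network X (normV X V A) (normA X V A)"
proof -
  interpret PN X V A using assms(2) by unfold_locales
  show ?thesis using partA partB by blast
qed

end
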